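(* Let $H\in M_{M\times N}(\mathbb T)$ be a partial Hadamard matrix with rows $R_1,\ldots,R_M\in\mathbb T^N$. Then there is a unique unital $*$-representation $\pi_H:\widetilde A_s(M)\to M_N(\mathbb C)$ with $\pi_H(u_{ij})=\mathrm{Proj}(R_i/R_j)$ for all $i,j$.
   Context: $\mathbb T$ is the unit circle. A partial Hadamard matrix is a matrix $H\in M_{M\times N}(\mathbb T)$ whose rows are pairwise orthogonal in $\mathbb C^N$. $R_i/R_j\in\mathbb T^N$ denotes entrywise division, and $\mathrm{Proj}(\xi)$ denotes the orthogonal projection onto $\mathbb C\xi$. A submagic matrix over a unital $C^*$-algebra is a square matrix whose entries are orthogonal projections, pairwise orthogonal within each row and within each column; $\widetilde A_s(M)$ is the universal unital $C^*$-algebra generated by the entries $u_{ij}$ of an $M\times M$ submagic matrix. *)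

theory Defs
  imports "HOL-Analysis.Analysis" "HOL-Library.Poly_Mapping"
begin

definition partial_hadamard :: "complex^'n^'m \<Rightarrow> bool" where
  "partial_hadamard H \<longleftrightarrow>
     (\<forall>i j. cmod (H$i$j) = 1) \<and>
     (\<forall>i k. i \<noteq> k \<longrightarrow> (\<Sum>j\<in>UNIV. H$i$j * cnj (H$k$j)) = 0)"

definition row_div :: "complex^'n \<Rightarrow> complex^'n \<Rightarrow> complex^'n" where
  "row_div x y = (\<chi> k. x$k / y$k)"

text \<open>Orthogonal projection onto the line C xi (zero if xi = 0).\<close>
definition Proj :: "complex^'n \<Rightarrow> complex^'n^'n" where
  "Proj \<xi> = (\<chi> a b. \<xi>$a * cnj (\<xi>$b) / complex_of_real ((norm \<xi>)\<^sup>2))"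

definition mat_adj :: "complex^'n^'n \<Rightarrow> complex^'n^'n" where
  "mat_adj A = (\<chi> i j. cnj (A$j$i))"

definition mat_scale :: "complex \<Rightarrow> complex^'n^'n \<Rightarrow> complex^'n^'n" where
  "mat_scale c A = (\<chi> i j. c * A$i$j)"

text \<open>A letter (i,j,False) stands for u_ij, (i,j,True) for its adjoint u_ij^*.
  Noncommutative polynomials: finitely supported complex functions on words.\<close>

type_synonym 'm ncpoly = "('m \<times> 'm \<times> bool) list \<Rightarrow>\<^sub>0 complex"

definition nc_mult :: "'m ncpoly \<Rightarrow> 'm ncpoly \<Rightarrow> 'm ncpoly" where
  "nc_mult p q = (\<Sum>u\<in>Poly_Mapping.keys p. \<Sum>v\<in>Poly_Mapping.keys q.
      Poly_Mapping.single (u @ v) (Poly_Mapping.lookup p u * Poly_Mapping.lookup q v))"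

definition nc_smult :: "complex \<Rightarrow> 'm ncpoly \<Rightarrow> 'm ncpoly" where
  "nc_smult c p = Poly_Mapping.map (\<lambda>x. c * x) p"

definition nc_one :: "'m ncpoly" where
  "nc_one = Poly_Mapping.single [] 1"

definition letter_star :: "'m \<times> 'm \<times> bool \<Rightarrow> 'm \<times> 'm \<times> bool" where
  "letter_star l = (case l of (i, j, b) \<Rightarrow> (i, j, \<not> b))"

definition nc_star :: "'m ncpoly \<Rightarrow> 'm ncpoly" where
  "nc_star p = (\<Sum>u\<in>Poly_Mapping.keys p.
      Poly_Mapping.single (map letter_star (rev u)) (cnj (Poly_Mapping.lookup p u)))"

definition nc_gen :: "'m \<Rightarrow> 'm \<Rightarrow> 'm ncpoly" where
  "nc_gen i j = Poly_Mapping.single [(i, j, False)] 1"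

definition submagic_rels :: "'m ncpoly set" where
  "submagic_rels =
     {nc_gen i j - nc_star (nc_gen i j) | i j. True} \<union>
     {nc_mult (nc_gen i j) (nc_gen i j) - nc_gen i j | i j. True} \<union>
     {nc_mult (nc_gen i j) (nc_gen i k) | i j k. j \<noteq> k} \<union>
     {nc_mult (nc_gen i j) (nc_gen k j) | i j k. i \<noteq> k}"

text \<open>A unital *-representation of the submagic algebra A_s(M) into M_N(C),
  given by its lift to the free *-algebra: a unital *-homomorphism killing the
  defining relations (equivalently, killing the ideal they generate).\<close>

definition submagic_rep :: "('m ncpoly \<Rightarrow> complex^'n^'n) \<Rightarrow> bool" where
  "submagic_rep \<pi> \<longleftrightarrow>
     (\<forall>p q. \<pi> (p + q) = \<pi> p + \<pi> q) \<and>
     (\<forall>c p. \<pi> (nc_smult c p) = mat_scale c (\<pi> p)) \<and>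
     (\<forall>p q. \<pi> (nc_mult p q) = \<pi> p ** \<pi> q) \<and>
     \<pi> nc_one = mat 1 \<and>
     (\<forall>p. \<pi> (nc_star p) = mat_adj (\<pi> p)) \<and>
     (\<forall>r\<in>submagic_rels. \<pi> r = 0)"

end

theory Submission
  imports Defs
begin

definition Lin :: "('a list \<Rightarrow> complex^'n^'n) \<Rightarrow> ('a list \<Rightarrow>\<^sub>0 complex) \<Rightarrow> complex^'n^'n" where
  "Lin f p = (\<Sum>u\<in>Poly_Mapping.keys p. mat_scale (Poly_Mapping.lookup p u) (f u))"

lemma mat_scale_0[simp]: "mat_scale 0 A = 0" "mat_scale c 0 = 0"
  by (simp_all add: mat_scale_def vec_eq_iff)

lemma mat_scale_add: "mat_scale (a+b) A = mat_scale a A + mat_scale b A"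
  by (simp add: mat_scale_def vec_eq_iff algebra_simps)
lemma mat_scale_diff: "mat_scale (a-b) A = mat_scale a A - mat_scale b A"
  by (simp add: mat_scale_def vec_eq_iff algebra_simps)

lemma Lin_superset:
  assumes "finite S" "Poly_Mapping.keys p \<subseteq> S"
  shows "Lin f p = (\<Sum>u\<in>S. mat_scale (Poly_Mapping.lookup p u) (f u))"
  unfolding Lin_def
  by (rule sum.mono_neutral_left[OF assms]) (auto simp: in_keys_iff)

lemma Lin_add: "Lin f (p + q) = Lin f p + Lin f q"
proof -
  let ?S = "Poly_Mapping.keys p \<union> Poly_Mapping.keys q"
  have "Lin f (p+q) = (\<Sum>u\<in>?S. mat_scale (Poly_Mapping.lookup (p+q) u) (f u))"
    by (rule Lin_superset) (auto dest: set_mp[OF keys_add])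
  also have "\<dots> = (\<Sum>u\<in>?S. mat_scale (Poly_Mapping.lookup p u) (f u)) + (\<Sum>u\<in>?S. mat_scale (Poly_Mapping.lookup q u) (f u))"
    by (simp add: lookup_add mat_scale_add sum.distrib)
  also have "\<dots> = Lin f p + Lin f q"
    by (subst (1 2) Lin_superset[where S="?S"]) auto
  finally show ?thesis .
qed

lemma Lin_diff: "Lin f (p - q) = Lin f p - Lin f q"
proof -
  let ?S = "Poly_Mapping.keys p \<union> Poly_Mapping.keys q"
  have "Lin f (p-q) = (\<Sum>u\<in>?S. mat_scale (Poly_Mapping.lookup (p-q) u) (f u))"
    by (rule Lin_superset) (auto dest: set_mp[OF keys_diff])
  also have "\<dots> = (\<Sum>u\<in>?S. mat_scale (Poly_Mapping.lookup p u) (f u)) - (\<Sum>u\<in>?S. mat_scale (Poly_Mapping.lookup q u) (f u))"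
    by (simp add: lookup_minus mat_scale_diff sum_subtractf)
  also have "\<dots> = Lin f p - Lin f q"
    by (subst (1 2) Lin_superset[where S="?S"]) auto
  finally show ?thesis .
qed

lemma Lin_zero[simp]: "Lin f 0 = 0" by (simp add: Lin_def)

lemma Lin_sum: "Lin f (\<Sum>x\<in>A. g x) = (\<Sum>x\<in>A. Lin f (g x))"
  by (induction A rule: infinite_finite_induct) (auto simp: Lin_add)

lemma Lin_single[simp]: "Lin f (Poly_Mapping.single w c) = mat_scale c (f w)"
  by (simp add: Lin_def)

lemma poly_mapping_expand:
  "p = (\<Sum>u\<in>Poly_Mapping.keys p. Poly_Mapping.single u (Poly_Mapping.lookup p u))"
  by (rule poly_mapping_eqI) (simp add: lookup_sum lookup_single when_def in_keys_iff)


lemma matrix_add_rdistrib: "((B + C) ** A) = (B ** A) + (C ** A)"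
  by (vector matrix_matrix_mult_def sum.distrib[symmetric] field_simps)

lemma matrix_sum_left: "(\<Sum>x\<in>S. f x) ** (A::'a::comm_ring_1^'n^'n) = (\<Sum>x\<in>S. f x ** A)"
  by (induction S rule: infinite_finite_induct) (auto simp: matrix_add_rdistrib)
lemma matrix_sum_right: "(A::'a::comm_ring_1^'n^'n) ** (\<Sum>x\<in>S. f x) = (\<Sum>x\<in>S. A ** f x)"
  by (induction S rule: infinite_finite_induct) (auto simp: matrix_add_ldistrib)

lemma mat_scale_mult_left: "mat_scale c A ** B = mat_scale c (A ** B)"
  by (simp add: mat_scale_def matrix_matrix_mult_def vec_eq_iff sum_distrib_left mult.assoc)
lemma mat_scale_mult_right: "A ** mat_scale c B = mat_scale c (A ** B)"
  by (simp add: mat_scale_def matrix_matrix_mult_def vec_eq_iff sum_distrib_left mult.left_commute)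
lemma mat_scale_sum: "mat_scale c (\<Sum>x\<in>S. f x) = (\<Sum>x\<in>S. mat_scale c (f x))"
  by (induction S rule: infinite_finite_induct) (auto simp: mat_scale_def vec_eq_iff algebra_simps)
lemma mat_scale_mult: "mat_scale a (mat_scale b A) = mat_scale (a*b) A"
  by (simp add: mat_scale_def vec_eq_iff mult.assoc)

lemma mat_adj_add: "mat_adj (A + B) = mat_adj A + mat_adj B"
  by (simp add: mat_adj_def vec_eq_iff)
lemma mat_adj_0[simp]: "mat_adj 0 = 0"
  by (simp add: mat_adj_def vec_eq_iff)
lemma mat_adj_sum: "mat_adj (\<Sum>x\<in>S. f x) = (\<Sum>x\<in>S. mat_adj (f x))"
  by (induction S rule: infinite_finite_induct) (auto simp: mat_adj_add)
lemma mat_adj_scale: "mat_adj (mat_scale c A) = mat_scale (cnj c) (mat_adj A)"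
  by (simp add: mat_adj_def mat_scale_def vec_eq_iff)
lemma mat_adj_adj[simp]: "mat_adj (mat_adj A) = A"
  by (simp add: mat_adj_def vec_eq_iff)
lemma mat_adj_mult: "mat_adj (A ** B) = mat_adj B ** mat_adj A"
  by (simp add: mat_adj_def matrix_matrix_mult_def vec_eq_iff mult.commute)
lemma mat_adj_one[simp]: "mat_adj (mat 1) = mat 1"
  by (simp add: mat_adj_def mat_def vec_eq_iff)

fun Wd :: "('l \<Rightarrow> complex^'n^'n) \<Rightarrow> 'l list \<Rightarrow> complex^'n^'n" where
  "Wd L [] = mat 1" | "Wd L (l # u) = L l ** Wd L u"

lemma Wd_append: "Wd L (u @ v) = Wd L u ** Wd L v"
  by (induction u) (auto simp: matrix_mul_assoc)

lemma Wd_star: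
  assumes "\<And>l. L (letter_star l) = mat_adj (L l)"
  shows "Wd L (map letter_star (rev u)) = mat_adj (Wd L u)"
  by (induction u) (auto simp: Wd_append assms mat_adj_mult)

lemma Lin_mult: "Lin (Wd L) (nc_mult p q) = Lin (Wd L) p ** Lin (Wd L) q"
proof -
  have "Lin (Wd L) (nc_mult p q) = (\<Sum>u\<in>Poly_Mapping.keys p. \<Sum>v\<in>Poly_Mapping.keys q.
      mat_scale (Poly_Mapping.lookup p u * Poly_Mapping.lookup q v) (Wd L u ** Wd L v))"
    unfolding nc_mult_def Lin_sum Lin_single Wd_append ..
  also have "\<dots> = Lin (Wd L) p ** Lin (Wd L) q"
    apply (simp only: Lin_def matrix_sum_left)
    apply (simp only: matrix_sum_right mat_scale_mult_left mat_scale_mult_right mat_scale_mult)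
    by (simp add: mult.commute)
  finally show ?thesis .
qed

lemma Lin_star:
  assumes "\<And>l. L (letter_star l) = mat_adj (L l)"
  shows "Lin (Wd L) (nc_star p) = mat_adj (Lin (Wd L) p)"
proof -
  have "Lin (Wd L) (nc_star p) = (\<Sum>u\<in>Poly_Mapping.keys p. mat_scale (cnj (Poly_Mapping.lookup p u)) (mat_adj (Wd L u)))"
    unfolding nc_star_def Lin_sum Lin_single using Wd_star[of L, OF assms] by simp
  then show ?thesis unfolding Lin_def mat_adj_sum mat_adj_scale by simp
qed

lemma Lin_smult: "Lin f (nc_smult c p) = mat_scale c (Lin f p)"
proof -
  have "nc_smult c p = (\<Sum>u\<in>Poly_Mapping.keys p. Poly_Mapping.single u (c * Poly_Mapping.lookup p u))"
    unfolding nc_smult_def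
    by (rule poly_mapping_eqI) (simp add: lookup_sum lookup_single when_def in_keys_iff Poly_Mapping.map.rep_eq)
  then have "Lin f (nc_smult c p) = (\<Sum>u\<in>Poly_Mapping.keys p. mat_scale (c * Poly_Mapping.lookup p u) (f u))"
    by (simp only: Lin_sum Lin_single)
  then show ?thesis
    by (simp add: Lin_def mat_scale_sum mat_scale_mult)
qed


lemma mat_scale_1[simp]: "mat_scale 1 A = A"
  by (simp add: mat_scale_def vec_eq_iff)

lemma nc_star_gen: "nc_star (nc_gen i j) = Poly_Mapping.single [(i,j,True)] 1"
  by (simp add: nc_star_def nc_gen_def letter_star_def)

lemma nc_mult_single: "nc_mult (Poly_Mapping.single u 1) (Poly_Mapping.single v 1) = Poly_Mapping.single (u@v) (1::complex)"
  by (simp add: nc_mult_def)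

definition Lmat :: "('m \<Rightarrow> 'm \<Rightarrow> complex^'n^'n) \<Rightarrow> 'm \<times> 'm \<times> bool \<Rightarrow> complex^'n^'n" where
  "Lmat P l = (case l of (i,j,b) \<Rightarrow> if b then mat_adj (P i j) else P i j)"

lemma Lmat_star: "Lmat P (letter_star l) = mat_adj (Lmat P l)"
  by (cases l) (auto simp: Lmat_def letter_star_def)

lemma rep_determined:
  fixes \<pi> :: "'m ncpoly \<Rightarrow> complex^'n^'n"
  assumes rep: "submagic_rep \<pi>" and gen: "\<forall>i j. \<pi> (nc_gen i j) = P i j"
  shows "\<pi> = Lin (Wd (Lmat P))"
proof
  fix p :: "'m ncpoly"
  have add: "\<And>p q. \<pi> (p + q) = \<pi> p + \<pi> q" and sm: "\<And>c p. \<pi> (nc_smult c p) = mat_scale c (\<pi> p)"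
    and mu: "\<And>p q. \<pi> (nc_mult p q) = \<pi> p ** \<pi> q" and one: "\<pi> nc_one = mat 1"
    and st: "\<And>p. \<pi> (nc_star p) = mat_adj (\<pi> p)"
    using rep unfolding submagic_rep_def by auto
  have z: "\<pi> 0 = 0" using add[of 0 0] by simp
  have su: "\<pi> (\<Sum>x\<in>A. g x) = (\<Sum>x\<in>A. \<pi> (g x))" for A and g :: "_ \<Rightarrow> 'm ncpoly"
    by (induction A rule: infinite_finite_induct) (auto simp: z add)
  have letter: "\<pi> (Poly_Mapping.single [l] 1) = Lmat P l" for l
  proof (cases l)
    case (fields i j b)
    have t: "\<pi> (Poly_Mapping.single [(i,j,True)] 1) = mat_adj (P i j)"
      using st[of "nc_gen i j"] gen unfolding nc_star_gen by simp
    have f: "\<pi> (Poly_Mapping.single [(i,j,False)] 1) = P i j"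
      using gen unfolding nc_gen_def by simp
    show ?thesis using t f fields by (cases b) (auto simp: Lmat_def)
  qed
  have w1: "\<pi> (Poly_Mapping.single w 1) = Wd (Lmat P) w" for w
  proof (induction w)
    case Nil then show ?case using one by (simp add: nc_one_def)
  next
    case (Cons l w)
    have "Poly_Mapping.single (l#w) (1::complex) = nc_mult (Poly_Mapping.single [l] 1) (Poly_Mapping.single w 1)"
      by (simp add: nc_mult_single)
    then show ?case using Cons mu letter by simp
  qed
  have wc: "\<pi> (Poly_Mapping.single w c) = mat_scale c (Wd (Lmat P) w)" for w c
  proof -
    have "nc_smult c (Poly_Mapping.single w 1) = Poly_Mapping.single w c"
      by (simp add: nc_smult_def)
    then show ?thesis using sm[of c "Poly_Mapping.single w 1"] w1 by simp
  qed
  have "\<pi> p = \<pi> (\<Sum>u\<in>Poly_Mapping.keys p. Poly_Mapping.single u (Poly_Mapping.lookup p u))"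
    using poly_mapping_expand[of p] by simp
  also have "\<dots> = Lin (Wd (Lmat P)) p"
    by (simp add: su wc Lin_def)
  finally show "\<pi> p = Lin (Wd (Lmat P)) p" .
qed

lemma norm_sq_unimod:
  fixes x :: "complex^'n"
  assumes "\<forall>c. cmod (x$c) = 1"
  shows "(norm x)^2 = real CARD('n)"
  using assms by (simp add: norm_vec_def L2_set_def)

lemma Proj_adj: "mat_adj (Proj \<xi>) = Proj \<xi>"
  by (simp add: mat_adj_def Proj_def vec_eq_iff mult.commute)

lemma Proj_mult:
  "Proj \<xi> ** Proj \<eta> = (\<chi> a b. \<xi>$a * cnj(\<eta>$b) * (\<Sum>c\<in>UNIV. cnj(\<xi>$c)*\<eta>$c) /
      (complex_of_real ((norm \<xi>)\<^sup>2) * complex_of_real ((norm \<eta>)\<^sup>2)))"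
  by (simp add: Proj_def matrix_matrix_mult_def vec_eq_iff sum_divide_distrib sum_distrib_left mult_ac)


lemma unit_cnj: "cmod z = 1 \<Longrightarrow> z * cnj z = 1"
  by (metis complex_norm_square mult.commute of_real_1 power_one)

lemma cnj_div_mult:
  assumes "cmod b = 1" "cmod d = 1"
  shows "cnj (a / b) * (c / d) = (cnj a * c) * (b * cnj d)"
proof -
  have b0: "b \<noteq> 0" and d0: "d \<noteq> 0" using assms by auto
  have "cnj (a/b) * (c/d) = (cnj a * c) / (cnj b * d)" by (simp add: complex_cnj_divide)
  also have "\<dots> = (cnj a * c) * (b * cnj d)"
    using unit_cnj[OF assms(1)] unit_cnj[OF assms(2)] b0 d0
    by (simp add: field_simps) (metis mult.assoc mult.commute mult.left_commute mult_1)
  finally show ?thesis .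
qed

context
  fixes H :: "complex^'n^'m"
  assumes PH: "partial_hadamard H"
begin

lemma PH_unit: "cmod (H$i$j) = 1" using PH by (simp add: partial_hadamard_def)
lemma PH_orth: "i \<noteq> k \<Longrightarrow> (\<Sum>j\<in>UNIV. H$i$j * cnj (H$k$j)) = 0"
  using PH by (simp add: partial_hadamard_def)

lemma rd_unit: "\<forall>c. cmod (row_div (H$i) (H$j) $ c) = 1"
  by (simp add: row_div_def norm_divide PH_unit)

lemma rd_norm: "(norm (row_div (H$i) (H$j)))^2 = real CARD('n)"
  using norm_sq_unimod[OF rd_unit] .

lemma Proj_rd_mult:
  "Proj (row_div (H$i) (H$j)) ** Proj (row_div (H$k) (H$l)) =
   (\<chi> a b. row_div (H$i) (H$j) $ a * cnj(row_div (H$k) (H$l) $ b) *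
     (\<Sum>c\<in>UNIV. (cnj (H$i$c) * H$k$c) * (H$j$c * cnj (H$l$c))) / (of_nat CARD('n) * of_nat CARD('n)))"
proof -
  have "(\<Sum>c\<in>UNIV. cnj (row_div (H$i) (H$j) $ c) * row_div (H$k) (H$l) $ c) =
        (\<Sum>c\<in>UNIV. (cnj (H$i$c) * H$k$c) * (H$j$c * cnj (H$l$c)))"
    unfolding row_div_def vec_lambda_beta
    by (rule sum.cong[OF refl], rule cnj_div_mult[OF PH_unit PH_unit])
  then show ?thesis unfolding Proj_mult rd_norm by simp
qed

lemma Proj_idem: "Proj (row_div (H$i) (H$j)) ** Proj (row_div (H$i) (H$j)) = Proj (row_div (H$i) (H$j))"
proof -
  have s: "(\<Sum>c\<in>UNIV. (cnj (H$i$c) * H$i$c) * (H$j$c * cnj (H$j$c))) = of_nat CARD('n)"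
    using unit_cnj[OF PH_unit] by (simp add: mult.commute)
  show ?thesis
    unfolding Proj_rd_mult s
    by (simp add: Proj_def rd_norm vec_eq_iff)
qed

lemma Proj_orth1: "j \<noteq> k \<Longrightarrow> Proj (row_div (H$i) (H$j)) ** Proj (row_div (H$i) (H$k)) = 0"
proof -
  assume jk: "j \<noteq> k"
  have s: "(\<Sum>c\<in>UNIV. (cnj (H$i$c) * H$i$c) * (H$j$c * cnj (H$k$c))) = 0"
    using unit_cnj[OF PH_unit] PH_orth[OF jk] by (simp add: mult.commute)
  show ?thesis unfolding Proj_rd_mult s by (simp add: vec_eq_iff)
qed

lemma Proj_orth2: "i \<noteq> k \<Longrightarrow> Proj (row_div (H$i) (H$j)) ** Proj (row_div (H$k) (H$j)) = 0"
proof -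
  assume ik: "i \<noteq> k"
  have s: "(\<Sum>c\<in>UNIV. (cnj (H$i$c) * H$k$c) * (H$j$c * cnj (H$j$c))) = 0"
    using unit_cnj[OF PH_unit] PH_orth[of k i] ik by (simp add: mult.commute)
  show ?thesis unfolding Proj_rd_mult s by (simp add: vec_eq_iff)
qed

end


theorem proposition2p1:
  fixes H :: "complex^'n^'m"
  assumes "partial_hadamard H"
  shows "\<exists>!\<pi> :: 'm ncpoly \<Rightarrow> complex^'n^'n.
           submagic_rep \<pi> \<and> (\<forall>i j. \<pi> (nc_gen i j) = Proj (row_div (H$i) (H$j)))"
proof -
  define P where "P i j = Proj (row_div (H$i) (H$j))" for i j
  define \<pi> :: "'m ncpoly \<Rightarrow> complex^'n^'n" where "\<pi> = Lin (Wd (Lmat P))"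
  have gen: "\<pi> (nc_gen i j) = P i j" for i j
    by (simp add: \<pi>_def nc_gen_def Lmat_def)
  have genT: "\<pi> (nc_star (nc_gen i j)) = P i j" for i j
    by (simp add: \<pi>_def nc_star_gen Lmat_def P_def Proj_adj)
  have mg: "\<pi> (nc_mult (nc_gen i j) (nc_gen k l)) = P i j ** P k l" for i j k l
    by (simp add: \<pi>_def Lin_mult nc_gen_def Lmat_def)
  have diff: "\<pi> (p - q) = \<pi> p - \<pi> q" for p q by (simp add: \<pi>_def Lin_diff)
  have rels: "\<forall>r\<in>submagic_rels. \<pi> r = 0"
    unfolding submagic_rels_def
    using Proj_idem[OF assms] Proj_orth1[OF assms] Proj_orth2[OF assms]
    by (auto simp: diff gen genT mg P_def)
  have rep: "submagic_rep \<pi>"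
    unfolding submagic_rep_def
    using rels by (simp add: \<pi>_def Lin_add Lin_smult Lin_mult Lin_star Lmat_star nc_one_def)
  show ?thesis
  proof (rule ex1I[of _ \<pi>])
    show "submagic_rep \<pi> \<and> (\<forall>i j. \<pi> (nc_gen i j) = Proj (row_div (H$i) (H$j)))"
      using rep gen by (simp add: P_def)
  next
    fix \<sigma> :: "'m ncpoly \<Rightarrow> complex^'n^'n"
    assume "submagic_rep \<sigma> \<and> (\<forall>i j. \<sigma> (nc_gen i j) = Proj (row_div (H$i) (H$j)))"
    then show "\<sigma> = \<pi>" unfolding \<pi>_def
      by (intro rep_determined) (auto simp: P_def)
  qed
qed

end
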